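(* Let $q\ge2$ be an even integer. For integers $1\le c_1,c_2,c_3,c_4\le q/2$, define $$f(c_1,c_2,c_3,c_4)=\delta_{c_1,c_2}\delta_{c_3,c_4}-\#\big\{\,|q+1-2|x||\ :\ x\in\{c_1+c_2,\ c_3+c_4,\ c_1-c_2,\ c_3-c_4\}\big\}.$$ Then $f$ is invariant under every permutation of its four arguments.
   Context: $\#S$ denotes the cardinality of a set $S$, and $\delta$ is the Kronecker delta. *)

theory Defs
  imports "HOL-Combinatorics.Permutations"
begin

definition fq :: "int \<Rightarrow> int \<Rightarrow> int \<Rightarrow> int \<Rightarrow> int \<Rightarrow> int" where
  "fq q c1 c2 c3 c4 =
     (if c1 = c2 \<and> c3 = c4 then 1 else 0)
     - int (card ((\<lambda>x. \<bar>q + 1 - 2 * \<bar>x\<bar>\<bar>) ` {c1 + c2, c3 + c4, c1 - c2, c3 - c4}))"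

end

theory Submission
  imports Defs
begin
definition Z :: "int \<Rightarrow> int \<Rightarrow> int" where "Z N x = (if x = 0 \<or> x = N \<or> x = -N then 1 else 0)"
definition h :: "int \<Rightarrow> int \<Rightarrow> int" where "h q x = \<bar>q + 1 - 2 * \<bar>x\<bar>\<bar>"
definition T :: "int \<Rightarrow> int \<Rightarrow> int \<Rightarrow> int \<Rightarrow> int \<Rightarrow> int" where
 "T N a b c d = Z N (a+b+c+d) + Z N (a+b+c-d) + Z N (a+b-c+d) + Z N (a+b-c-d) + Z N (a-b+c+d) + Z N (a-b+c-d) + Z N (a-b-c+d) + Z N (a-b-c-d)"
definition ind :: "bool \<Rightarrow> int" where "ind P = (if P then 1 else 0)"

lemma card4: "u1 \<noteq> u3 \<Longrightarrow> u2 \<noteq> u4 \<Longrightarrow> int (card {u1,u2,u3,u4::int}) = 4 - ind (u1=u2) - ind (u3=u4) - ind (u1=u4) - ind (u3=u2)"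
  by (auto simp add: card_insert_if ind_def)

context fixes q k a b c d :: int
  assumes k: "q = 2*k" and r: "1 \<le> a" "1 \<le> b" "1 \<le> c" "1 \<le> d" "2*a \<le> q" "2*b \<le> q" "2*c \<le> q" "2*d \<le> q"
begin
lemma P0: "h q (a+b) \<noteq> h q (a-b)" using k r unfolding h_def by (auto simp: abs_if)
lemma P1: "ind (h q (a+b) = h q (c+d)) = Z (q+1) (a+b+c+d) + Z (q+1) (a+b-c-d)"
  using k r unfolding h_def Z_def ind_def apply (auto simp: abs_if) by presburger+
lemma P2: "ind (h q (a-b) = h q (c-d)) + ind (a = b \<and> c = d) = Z (q+1) (a-b-c+d) + Z (q+1) (a-b+c-d)"
  using k r unfolding h_def Z_def ind_def by (auto simp: abs_if)
lemma P3: "ind (h q (a+b) = h q (c-d)) = Z (q+1) (a+b-c+d) + Z (q+1) (a+b+c-d)"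
  using k r unfolding h_def Z_def ind_def by (auto simp: abs_if)
lemma P4: "ind (h q (a-b) = h q (c+d)) = Z (q+1) (a-b+c+d) + Z (q+1) (a-b-c-d)"
  using k r unfolding h_def Z_def ind_def by (auto simp: abs_if)
lemma P0': "h q (c+d) \<noteq> h q (c-d)" using k r unfolding h_def by (auto simp: abs_if)
lemma fqT: "fq q a b c d = T (q+1) a b c d - 4"
proof -
  have "fq q a b c d = ind (a = b \<and> c = d) - int (card {h q (a+b), h q (c+d), h q (a-b), h q (c-d)})"
    unfolding fq_def h_def ind_def by simp
  also have "\<dots> = T (q+1) a b c d - 4"
    unfolding card4[OF P0 P0'] T_def using P1 P2 P3 P4 by linarith
  finally show ?thesis .
qed
end
lemma Zn: "Z N (x - y) = Z N (y - x)" unfolding Z_def by auto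
lemma Tsym:
  "T N a b c d = T N b a c d" "T N a b c d = T N a c b d" "T N a b c d = T N a b d c"
  unfolding T_def by (simp_all add: algebra_simps Zn)

lemma Tperm:
  fixes c :: "nat \<Rightarrow> int"
  assumes "i < 4" "j < 4" "k < 4" "l < 4" "i \<noteq> j" "i \<noteq> k" "i \<noteq> l" "j \<noteq> k" "j \<noteq> l" "k \<noteq> l"
  shows "T N (c i) (c j) (c k) (c l) = T N (c 0) (c 1) (c 2) (c 3)"
proof -
  have L: "\<And>x::nat. x < 4 \<Longrightarrow> x = 0 \<or> x = 1 \<or> x = 2 \<or> x = 3" by auto
  from L[OF assms(1)] L[OF assms(2)] L[OF assms(3)] L[OF assms(4)] assms(5-10) show ?thesis
    by (elim disjE) (simp_all add: T_def algebra_simps Zn)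
qed

theorem corollary4p4:
  fixes q :: int and c :: "nat \<Rightarrow> int" and \<sigma> :: "nat \<Rightarrow> nat"
  assumes "q \<ge> 2" and "even q"
    and "\<forall>i<4. 1 \<le> c i \<and> 2 * c i \<le> q"
    and "\<sigma> permutes {0..<4}"
  shows "fq q (c (\<sigma> 0)) (c (\<sigma> 1)) (c (\<sigma> 2)) (c (\<sigma> 3)) = fq q (c 0) (c 1) (c 2) (c 3)"
proof -
  obtain k where k: "q = 2*k" using assms(2) by auto
  have s: "\<And>i. i < 4 \<Longrightarrow> \<sigma> i < 4" using permutes_in_image[OF assms(4)] by auto
  have inj: "\<And>i j. \<sigma> i = \<sigma> j \<Longrightarrow> i = j" using permutes_inj[OF assms(4)] by (auto dest: injD)
  have b: "\<And>i. i < 4 \<Longrightarrow> 1 \<le> c i \<and> 2 * c i \<le> q" using assms(3) by auto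
  have "fq q (c (\<sigma> 0)) (c (\<sigma> 1)) (c (\<sigma> 2)) (c (\<sigma> 3)) = T (q+1) (c (\<sigma> 0)) (c (\<sigma> 1)) (c (\<sigma> 2)) (c (\<sigma> 3)) - 4"
    using b[OF s] by (intro fqT[OF k]) auto
  also have "\<dots> = T (q+1) (c 0) (c 1) (c 2) (c 3) - 4"
    apply (rule arg_cong[where f="\<lambda>x. x - 4"])
    apply (rule Tperm)
    by (auto simp: s dest: inj)
  also have "\<dots> = fq q (c 0) (c 1) (c 2) (c 3)"
    using b by (intro fqT[OF k, symmetric]) auto
  finally show ?thesis .
qed
end
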